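(* Let $k\geq 2$ be an integer and let $A=[\bm{a}_1,\dots,\bm{a}_n]\in\mathbb{R}^{m\times n}$ have columns with $\|\bm{a}_i\|_2=1$ for all $i$. Suppose the mutual coherence $\mu=\max_{1\leq i<j\leq n}|\langle \bm{a}_i,\bm{a}_j\rangle|$ satisfies $$\mu<\frac{1}{2k-1}.$$ Let $\bm{x}\in\mathbb{R}^n$ be arbitrary (not necessarily sparse), let $\epsilon\geq 0$, let $\bm{z}\in\mathbb{R}^m$ with $\|\bm{z}\|_2\leq\epsilon$, and set $\bm{b}=A\bm{x}+\bm{z}$. Let $\lambda>0$ and let $\bm{x}^{\sharp}$ be an optimal solution of $$\min_{\bm{y}\in\mathbb{R}^n}\ \|\bm{y}\|_1+\frac{1}{2\lambda}\|\bm{b}-A\bm{y}\|_2^2 .$$ Define $$\alpha_1=\frac{\sqrt{1+(k-1)\mu}}{1-(k-1)\mu},\qquad \alpha_2=\frac{\sqrt{k}\,\mu}{1-(k-1)\mu},$$ $$f_k(t)=kt^2+3\sqrt{k}\,t+3,\qquad g_k(t)=2kt^2+4\sqrt{k}\,t+1 .$$ Then $$\|A(\bm{x}^{\sharp}-\bm{x})\|_2\leq \frac{2\lambda}{\sqrt{k}\alpha_1\lambda+\epsilon}\,\|\bm{x}-\bm{x}_{[k]}\|_1+2(\sqrt{k}\alpha_1\lambda+\epsilon),$$ and $$\|\bm{x}^{\sharp}-\bm{x}\|_2\leq \frac{2\sqrt{k}\alpha_1 f_k(\alpha_2)\lambda+2g_k(\alpha_2)\epsilon}{\sqrt{k}(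1-\sqrt{k}\alpha_2)(\sqrt{k}\alpha_1\lambda+\epsilon)}\,\|\bm{x}-\bm{x}_{[k]}\|_1+\frac{\big(\sqrt{k}\alpha_1(5+2\sqrt{k}\alpha_2)\lambda+g_k(\alpha_2)\epsilon\big)(\sqrt{k}\alpha_1\lambda+\epsilon)}{\sqrt{k}(1-\sqrt{k}\alpha_2)\lambda}.$$
   Context: For $\bm{x}\in\mathbb{R}^n$, $\bm{x}_{[k]}$ denotes a best $k$-term approximation of $\bm{x}$, i.e. $\bm{x}_{[k]}\in\arg\min_{\|\bm{y}\|_0\leq k}\|\bm{y}-\bm{x}\|_2$, where $\|\bm{y}\|_0$ is the number of nonzero entries of $\bm{y}$. *)

theory Defs
  imports "HOL-Analysis.Analysis"
begin

definition l0 :: "real ^ 'n \<Rightarrow> nat" where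
  "l0 y = card {i. y $ i \<noteq> 0}"

definition l1 :: "real ^ 'n \<Rightarrow> real" where
  "l1 y = (\<Sum>i\<in>UNIV. \<bar>y $ i\<bar>)"

definition best_k_term :: "nat \<Rightarrow> real ^ 'n \<Rightarrow> real ^ 'n \<Rightarrow> bool" where
  "best_k_term k x xk \<longleftrightarrow> l0 xk \<le> k \<and>
     (\<forall>y. l0 y \<le> k \<longrightarrow> norm (xk - x) \<le> norm (y - x))"

text \<open>Mutual coherence: maximum of |<a_i,a_j>| over distinct columns
  (0 if there are fewer than two columns).\<close>
definition mutual_coherence :: "real ^ 'n ^ 'm \<Rightarrow> real" where
  "mutual_coherence A =
     Max (insert 0 {\<bar>column i A \<bullet> column j A\<bar> | i j. i \<noteq> j})"

definition lasso_obj :: "real \<Rightarrow> real ^ 'n ^ 'm \<Rightarrow> real ^ 'm \<Rightarrow> real ^ 'n \<Rightarrow> real" where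
  "lasso_obj lam A b y = l1 y + (1 / (2 * lam)) * (norm (b - A *v y))\<^sup>2"

end

theory Submission
  imports Defs
begin


lemma alg_final:
  fixes k :: nat and mu lam eps s u p q nh :: real
  assumes k2: "k \<ge> 2" and mu0: "0 \<le> mu" and muk: "mu < 1 / (2 * real k - 1)"
    and lam: "lam > 0" and eps: "eps \<ge> 0" and s0: "s \<ge> 0" and u0: "u \<ge> 0"
    and p0: "p \<ge> 0" and q0: "q \<ge> 0"
    and H1: "u\<^sup>2 \<le> 2 * lam * (sqrt (real k) * p - q + 2 * s) + 2 * eps * u"
    and H2: "p \<le> sqrt (1 + (real k - 1) * mu) / (1 - (real k - 1) * mu) * u
                + sqrt (real k) * mu / (1 - (real k - 1) * mu) * q"
    and H3: "nh \<le> u + sqrt mu * (sqrt (real k) * p + q)"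
  shows "let \<mu> = mu;
             \<alpha>1 = sqrt (1 + (real k - 1) * \<mu>) / (1 - (real k - 1) * \<mu>);
             \<alpha>2 = sqrt (real k) * \<mu> / (1 - (real k - 1) * \<mu>);
             f = (\<lambda>t. real k * t\<^sup>2 + 3 * sqrt (real k) * t + 3);
             g = (\<lambda>t. 2 * real k * t\<^sup>2 + 4 * sqrt (real k) * t + 1);
             D = sqrt (real k) * \<alpha>1 * lam + eps
         in u \<le> 2 * lam / D * s + 2 * D
          \<and> nh \<le>
              (2 * sqrt (real k) * \<alpha>1 * f \<alpha>2 * lam + 2 * g \<alpha>2 * eps)
                / (sqrt (real k) * (1 - sqrt (real k) * \<alpha>2) * D) * s
              + (sqrt (real k) * \<alpha>1 * (5 + 2 * sqrt (real k) * \<alpha>2) * lam + g \<alpha>2 * eps) * D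
                / (sqrt (real k) * (1 - sqrt (real k) * \<alpha>2) * lam)"
proof -
  define K where "K = sqrt (real k)"
  define c where "c = 1 - (real k - 1) * mu"
  define a1 where "a1 = sqrt (1 + (real k - 1) * mu) / c"
  define a2 where "a2 = K * mu / c"
  define \<beta> where "\<beta> = K * a2"
  define D where "D = K * a1 * lam + eps"
  define F where "F = \<beta>\<^sup>2 + 3 * \<beta> + 3"
  define G where "G = 2 * \<beta>\<^sup>2 + 4 * \<beta> + 1"
  have kr: "real k \<ge> 2" using k2 by simp
  have KK: "K * K = real k" unfolding K_def by simp
  have K0: "K > 0" unfolding K_def using kr by simp
  have m1: "(2 * real k - 1) * mu < 1" using muk kr by (simp add: field_simps)
  have km: "(real k - 1) * mu \<le> (2 * real k - 1) * mu" using mu0 kr by (intro mult_right_mono) auto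
  have c0: "c > 0" unfolding c_def using m1 km by linarith
  have c1: "c \<le> 1" unfolding c_def using mu0 kr by simp
  have kmu: "real k * mu < c" unfolding c_def using m1 by (simp add: algebra_simps)
  have beq: "\<beta> = real k * mu / c" unfolding \<beta>_def a2_def using KK by (simp add: mult.assoc[symmetric])
  have b1: "\<beta> < 1" unfolding beq using kmu c0 by simp
  have b0: "\<beta> \<ge> 0" unfolding beq using c0 mu0 by simp
  have sq1: "sqrt (1 + (real k - 1) * mu) \<ge> 1" using mu0 kr by simp
  have a1g: "a1 \<ge> 1"
  proof -
    have "c \<le> sqrt (1 + (real k - 1) * mu)" using c1 sq1 by linarith
    thus ?thesis unfolding a1_def using c0 by (simp add: le_divide_eq)
  qed
  have a20: "a2 \<ge> 0" unfolding a2_def using K0 mu0 c0 by simp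
  have D0: "D > 0" unfolding D_def using K0 a1g lam eps by (simp add: add_pos_nonneg)
  have mk1: "mu * real k \<le> 1" using kmu c1 by (simp add: mult.commute)
  have smK: "sqrt mu * K \<le> 1" unfolding K_def using mk1 by (simp add: real_sqrt_mult[symmetric])
  have Kp: "K * p \<le> K * a1 * u + \<beta> * q"
  proof -
    have "K * p \<le> K * (a1 * u + a2 * q)" using H2 K0 unfolding a1_def a2_def c_def K_def
      by (intro mult_left_mono) auto
    thus ?thesis by (simp add: \<beta>_def algebra_simps)
  qed
  have H1': "u\<^sup>2 \<le> 2 * lam * (K * p - q + 2 * s) + 2 * eps * u" using H1 unfolding K_def .
  have "2 * lam * (K * p) \<le> 2 * lam * (K * a1 * u + \<beta> * q)"
    using Kp lam by (intro mult_left_mono) auto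
  hence B: "u\<^sup>2 \<le> 2 * D * u - 2 * lam * (1 - \<beta>) * q + 4 * lam * s"
    using H1' unfolding D_def by (simp add: algebra_simps)
  have bq: "0 \<le> 2 * lam * (1 - \<beta>) * q" using lam b1 q0 by simp
  have U: "u \<le> 2 * lam / D * s + 2 * D"
  proof (cases "u \<le> 2 * D")
    case True
    have "0 \<le> 2 * lam / D * s" using lam D0 s0 by simp
    thus ?thesis using True by linarith
  next
    case False
    have "u * (u - 2 * D) \<le> 4 * lam * s" using B bq by (simp add: power2_eq_square algebra_simps)
    moreover have "2 * D * (u - 2 * D) \<le> u * (u - 2 * D)" using False by (intro mult_right_mono) auto
    ultimately have "2 * D * (u - 2 * D) \<le> 4 * lam * s" by linarith
    hence "u - 2 * D \<le> 4 * lam * s / (2 * D)" using D0 by (simp add: field_simps)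
    thus ?thesis using D0 by (simp add: field_simps)
  qed
  have "2 * D * u - u\<^sup>2 \<le> D\<^sup>2" using sum_power2_ge_zero[of "D - u" 0] by (simp add: power2_eq_square algebra_simps)
  hence "2 * lam * (1 - \<beta>) * q \<le> D\<^sup>2 + 4 * lam * s" using B by linarith
  hence Q: "q \<le> (D\<^sup>2 + 4 * lam * s) / (2 * lam * (1 - \<beta>))" using lam b1 by (simp add: field_simps)
  have "sqrt mu * (K * p) \<le> p" using smK p0 mult_right_mono[OF smK p0] by (simp add: mult.assoc)
  moreover have "sqrt mu * q \<le> q / K"
  proof -
    have "sqrt mu * K * q \<le> q" using mult_right_mono[OF smK q0] by simp
    thus ?thesis using K0 by (simp add: field_simps)
  qed
  ultimately have "nh \<le> u + p + q / K" using H3[folded K_def] by (simp add: algebra_simps)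
  also have "\<dots> \<le> (1 + a1) * u + (1 + \<beta>) / K * q"
  proof -
    have H2': "p \<le> a1 * u + a2 * q"
      using H2 unfolding a1_def c_def a2_def K_def .
    have "(1 + \<beta>) / K * q = q / K + a2 * q" using K0 by (simp add: \<beta>_def field_simps)
    thus ?thesis using H2' by (simp add: algebra_simps)
  qed
  also have "\<dots> \<le> (1 + a1) * (2 * lam / D * s + 2 * D) + (1 + \<beta>) / K * ((D\<^sup>2 + 4 * lam * s) / (2 * lam * (1 - \<beta>)))"
    using U Q a1g b0 K0 by (intro add_mono mult_left_mono) auto
  also have "\<dots> = ((1 + a1) * 2 * lam / D + (1 + \<beta>) * 2 / (K * (1 - \<beta>))) * s
                 + ((1 + a1) * 2 * D + (1 + \<beta>) * D\<^sup>2 / (2 * K * lam * (1 - \<beta>)))"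
  proof -
    have "\<And>E. E > 0 \<Longrightarrow> (1 + a1) * (2 * lam / D * s + 2 * D) + (1 + \<beta>) / K * ((D\<^sup>2 + 4 * lam * s) / (2 * lam * E))
       = ((1 + a1) * 2 * lam / D + (1 + \<beta>) * 2 / (K * E)) * s
                 + ((1 + a1) * 2 * D + (1 + \<beta>) * D\<^sup>2 / (2 * K * lam * E))"
      using D0 K0 lam by (simp add: field_simps)
    from this[of "1 - \<beta>"] show ?thesis using b1 by simp
  qed
  also have "\<dots> \<le> (2 * K * a1 * F * lam + 2 * G * eps) / (K * (1 - \<beta>) * D) * s
              + (K * a1 * (5 + 2 * \<beta>) * lam + G * eps) * D / (K * (1 - \<beta>) * lam)"
  proof (rule add_mono)
    have e1: "(1 + a1) * (1 - \<beta>) + (1 + \<beta>) * a1 \<le> a1 * F"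
    proof -
      have "(1 + a1) * (1 - \<beta>) \<le> (2 * a1) * (1 - \<beta>)" using a1g b1 by (intro mult_right_mono) auto
      moreover have "a1 * (3 - \<beta>) \<le> a1 * F" using a1g b0 unfolding F_def
        by (intro mult_left_mono) (auto simp: power2_eq_square)
      ultimately show ?thesis by (simp add: algebra_simps)
    qed
    have e2: "1 + \<beta> \<le> G" using b0 unfolding G_def by (simp add: power2_eq_square)
    have "K * lam * ((1 + a1) * (1 - \<beta>) + (1 + \<beta>) * a1) \<le> K * lam * (a1 * F)"
      using e1 K0 lam by (intro mult_left_mono) auto
    moreover have "(1 + \<beta>) * eps \<le> G * eps" using e2 eps by (rule mult_right_mono)
    ultimately have num: "2 * ((1 + a1) * lam * K * (1 - \<beta>) + (1 + \<beta>) * D) \<le> 2 * (K * a1 * F * lam + G * eps)"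
      unfolding D_def by (simp add: algebra_simps)
    have "(1 + a1) * 2 * lam / D + (1 + \<beta>) * 2 / (K * (1 - \<beta>))
          = 2 * ((1 + a1) * lam * K * (1 - \<beta>) + (1 + \<beta>) * D) / (K * (1 - \<beta>) * D)"
      using D0 K0 b1 by (simp add: field_simps)
    also have "\<dots> \<le> 2 * (K * a1 * F * lam + G * eps) / (K * (1 - \<beta>) * D)"
      using num D0 K0 b1 by (intro divide_right_mono) auto
    also have "\<dots> = (2 * K * a1 * F * lam + 2 * G * eps) / (K * (1 - \<beta>) * D)" by (simp add: algebra_simps)
    finally show "((1 + a1) * 2 * lam / D + (1 + \<beta>) * 2 / (K * (1 - \<beta>))) * s
        \<le> (2 * K * a1 * F * lam + 2 * G * eps) / (K * (1 - \<beta>) * D) * s"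
      using s0 by (rule mult_right_mono)
  next
    have e1: "4 * (1 + a1) * (1 - \<beta>) + (1 + \<beta>) * a1 \<le> 2 * a1 * (5 + 2 * \<beta>)"
    proof -
      have "4 * (1 + a1) * (1 - \<beta>) \<le> 4 * (2 * a1) * 1" using a1g b1 b0 by (intro mult_mono) auto
      moreover have "(1 + \<beta>) * a1 \<le> (2 + 4 * \<beta>) * a1" using a1g b0 by (intro mult_right_mono) auto
      ultimately show ?thesis by (simp add: algebra_simps)
    qed
    have e2: "1 + \<beta> \<le> 2 * G" using b0 unfolding G_def by (simp add: power2_eq_square)
    have "K * lam * (4 * (1 + a1) * (1 - \<beta>) + (1 + \<beta>) * a1) \<le> K * lam * (2 * a1 * (5 + 2 * \<beta>))"
      using e1 K0 lam by (intro mult_left_mono) auto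
    moreover have "(1 + \<beta>) * eps \<le> 2 * G * eps" using e2 eps by (rule mult_right_mono)
    ultimately have num: "4 * (1 + a1) * K * lam * (1 - \<beta>) + (1 + \<beta>) * D \<le> 2 * (K * a1 * (5 + 2 * \<beta>) * lam + G * eps)"
      unfolding D_def by (simp add: algebra_simps)
    have "(1 + a1) * 2 * D + (1 + \<beta>) * D\<^sup>2 / (2 * K * lam * (1 - \<beta>))
         = D * (4 * (1 + a1) * K * lam * (1 - \<beta>) + (1 + \<beta>) * D) / (2 * K * lam * (1 - \<beta>))"
      using D0 K0 b1 lam by (simp add: field_simps power2_eq_square)
    also have "\<dots> \<le> D * (2 * (K * a1 * (5 + 2 * \<beta>) * lam + G * eps)) / (2 * K * lam * (1 - \<beta>))"
      using num D0 K0 b1 lam by (intro divide_right_mono mult_left_mono) auto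
    also have "\<dots> = (K * a1 * (5 + 2 * \<beta>) * lam + G * eps) * D / (K * (1 - \<beta>) * lam)"
      using D0 K0 b1 lam by (simp add: field_simps)
    finally show "(1 + a1) * 2 * D + (1 + \<beta>) * D\<^sup>2 / (2 * K * lam * (1 - \<beta>))
        \<le> (K * a1 * (5 + 2 * \<beta>) * lam + G * eps) * D / (K * (1 - \<beta>) * lam)" .
  qed
  finally have NH: "nh \<le> (2 * K * a1 * F * lam + 2 * G * eps) / (K * (1 - \<beta>) * D) * s
              + (K * a1 * (5 + 2 * \<beta>) * lam + G * eps) * D / (K * (1 - \<beta>) * lam)" .
  have Fe: "real k * a2\<^sup>2 + 3 * K * a2 + 3 = F" unfolding F_def \<beta>_def using KK
    by (simp add: power2_eq_square algebra_simps)
  have Ge: "2 * real k * a2\<^sup>2 + 4 * K * a2 + 1 = G" unfolding G_def \<beta>_def using KK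
    by (simp add: power2_eq_square algebra_simps)
  show ?thesis
    unfolding Let_def
    using U NH
    unfolding K_def[symmetric] c_def[symmetric] a1_def[symmetric] a2_def[symmetric]
      D_def[symmetric] Fe Ge
    by (simp add: \<beta>_def mult.assoc)
qed


definition gram :: "real ^ 'n ^ 'm \<Rightarrow> 'n \<Rightarrow> 'n \<Rightarrow> real" where
  "gram A i j = column i A \<bullet> column j A"

lemma Av_inner:
  fixes A :: "real ^ 'n ^ 'm"
  shows "(A *v v) \<bullet> (A *v w) = (\<Sum>i\<in>UNIV. \<Sum>j\<in>UNIV. v$i * w$j * gram A i j)"
proof -
  have "(A *v v) \<bullet> (A *v w) = (\<Sum>r\<in>UNIV. (\<Sum>i\<in>UNIV. A$r$i * v$i) * (\<Sum>j\<in>UNIV. A$r$j * w$j))"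
    by (simp add: inner_vec_def matrix_vector_mult_def)
  also have "\<dots> = (\<Sum>r\<in>UNIV. \<Sum>i\<in>UNIV. \<Sum>j\<in>UNIV. v$i * w$j * (A$r$i * A$r$j))"
    by (simp add: sum_product algebra_simps)
  also have "\<dots> = (\<Sum>i\<in>UNIV. \<Sum>r\<in>UNIV. \<Sum>j\<in>UNIV. v$i * w$j * (A$r$i * A$r$j))"
    by (rule sum.swap)
  also have "\<dots> = (\<Sum>i\<in>UNIV. \<Sum>j\<in>UNIV. \<Sum>r\<in>UNIV. v$i * w$j * (A$r$i * A$r$j))"
    by (rule sum.cong[OF refl], rule sum.swap)
  also have "\<dots> = (\<Sum>i\<in>UNIV. \<Sum>j\<in>UNIV. v$i * w$j * gram A i j)"
    by (simp add: gram_def inner_vec_def column_def sum_distrib_left)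
  finally show ?thesis .
qed

lemma norm_sq_sum: "(norm (v::real^'n))\<^sup>2 = (\<Sum>i\<in>UNIV. (v$i)\<^sup>2)"
  unfolding power2_norm_eq_inner inner_vec_def by (simp add: power2_eq_square)

lemma norm_eq_sum: "norm (v::real^'n) = sqrt (\<Sum>i\<in>UNIV. (v$i)\<^sup>2)"
  using norm_sq_sum[of v] by (metis norm_ge_zero real_sqrt_unique)

lemma offdiag:
  fixes G :: "'n::finite \<Rightarrow> 'n \<Rightarrow> real"
  assumes diag: "\<And>i. G i i = 1" and off: "\<And>i j. i \<noteq> j \<Longrightarrow> \<bar>G i j\<bar> \<le> mu"
  shows "\<bar>(\<Sum>i\<in>UNIV. \<Sum>j\<in>UNIV. v i * w j * G i j) - (\<Sum>i\<in>UNIV. v i * w i)\<bar>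
     \<le> mu * ((\<Sum>i\<in>UNIV. \<bar>v i\<bar>) * (\<Sum>j\<in>UNIV. \<bar>w j\<bar>) - (\<Sum>i\<in>UNIV. \<bar>v i\<bar> * \<bar>w i\<bar>))"
proof -
  define E where "E i j = G i j - (if i = j then 1 else 0)" for i j
  have "(\<Sum>i\<in>UNIV. \<Sum>j\<in>UNIV. v i * w j * G i j) - (\<Sum>i\<in>UNIV. v i * w i)
      = (\<Sum>i\<in>UNIV. \<Sum>j\<in>UNIV. v i * w j * E i j)"
    by (simp add: E_def algebra_simps sum_subtractf if_distrib[where f="\<lambda>x. _ * x"] cong: if_cong)
  also have "\<bar>\<dots>\<bar> \<le> (\<Sum>i\<in>UNIV. \<Sum>j\<in>UNIV. \<bar>v i * w j * E i j\<bar>)"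
    by (rule order_trans[OF sum_abs sum_mono]) (rule sum_abs)
  also have "\<dots> \<le> (\<Sum>i\<in>UNIV. \<Sum>j\<in>UNIV. mu * (\<bar>v i\<bar> * \<bar>w j\<bar> - (if i = j then \<bar>v i\<bar> * \<bar>w j\<bar> else 0)))"
  proof (intro sum_mono)
    fix i j
    show "\<bar>v i * w j * E i j\<bar> \<le> mu * (\<bar>v i\<bar> * \<bar>w j\<bar> - (if i = j then \<bar>v i\<bar> * \<bar>w j\<bar> else 0))"
    proof (cases "i = j")
      case True thus ?thesis by (simp add: E_def diag)
    next
      case False
      have "\<bar>v i * w j * E i j\<bar> = (\<bar>v i\<bar> * \<bar>w j\<bar>) * \<bar>G i j\<bar>" using False by (simp add: E_def abs_mult)
      also have "\<dots> \<le> (\<bar>v i\<bar> * \<bar>w j\<bar>) * mu" by (rule mult_left_mono[OF off[OF False]]) simp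
      finally show ?thesis using False by (simp add: mult.commute)
    qed
  qed
  also have "\<dots> = mu * ((\<Sum>i\<in>UNIV. \<bar>v i\<bar>) * (\<Sum>j\<in>UNIV. \<bar>w j\<bar>) - (\<Sum>i\<in>UNIV. \<bar>v i\<bar> * \<bar>w i\<bar>))"
    by (simp add: sum_distrib_left[symmetric] sum_subtractf sum_product right_diff_distrib)
  finally show ?thesis .
qed

theorem theorem1:
  fixes A :: "real ^ 'n ^ 'm" and x xs xk :: "real ^ 'n" and z b :: "real ^ 'm"
    and k :: nat and \<epsilon> lam :: real
  assumes "k \<ge> 2"
    and "\<forall>i. norm (column i A) = 1"
    and "mutual_coherence A < 1 / (2 * real k - 1)"
    and "\<epsilon> \<ge> 0" and "norm z \<le> \<epsilon>" and "b = A *v x + z"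
    and "lam > 0"
    and "\<forall>y. lasso_obj lam A b xs \<le> lasso_obj lam A b y"
    and "best_k_term k x xk"
  shows "let \<mu> = mutual_coherence A;
             \<alpha>1 = sqrt (1 + (real k - 1) * \<mu>) / (1 - (real k - 1) * \<mu>);
             \<alpha>2 = sqrt (real k) * \<mu> / (1 - (real k - 1) * \<mu>);
             f = (\<lambda>t. real k * t\<^sup>2 + 3 * sqrt (real k) * t + 3);
             g = (\<lambda>t. 2 * real k * t\<^sup>2 + 4 * sqrt (real k) * t + 1);
             D = sqrt (real k) * \<alpha>1 * lam + \<epsilon>
         in norm (A *v (xs - x)) \<le> 2 * lam / D * l1 (x - xk) + 2 * D
          \<and> norm (xs - x) \<le>
              (2 * sqrt (real k) * \<alpha>1 * f \<alpha>2 * lam + 2 * g \<alpha>2 * \<epsilon>)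
                / (sqrt (real k) * (1 - sqrt (real k) * \<alpha>2) * D) * l1 (x - xk)
              + (sqrt (real k) * \<alpha>1 * (5 + 2 * sqrt (real k) * \<alpha>2) * lam + g \<alpha>2 * \<epsilon>) * D
                / (sqrt (real k) * (1 - sqrt (real k) * \<alpha>2) * lam)"
proof -
  note k2 = assms(1) and col = assms(2) and mul = assms(3) and eps = assms(4) and zn = assms(5)
    and bdef = assms(6) and lam = assms(7) and opt = assms(8) and best = assms(9)
  define mu where "mu = mutual_coherence A"
  define h where "h = xs - x"
  define T where "T = {i. xk$i \<noteq> 0}"
  define v where "v = (\<chi> i. if i \<in> T then h$i else 0)"
  define w where "w = (\<chi> i. if i \<in> T then 0 else h$i)"
  define u where "u = norm (A *v h)"
  define p where "p = norm v"
  define q where "q = (\<Sum>i\<in>UNIV. \<bar>w$i\<bar>)"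
  define s where "s = l1 (x - xk)"
  define c where "c = 1 - (real k - 1) * mu"
  have kr: "real k \<ge> 2" using k2 by simp
  have fin: "finite {\<bar>column i A \<bullet> column j A\<bar> | i j. i \<noteq> j}"
    by (rule finite_subset[of _ "(\<lambda>(i,j). \<bar>column i A \<bullet> column j A\<bar>) ` UNIV"]) auto
  have mu0: "0 \<le> mu" unfolding mu_def mutual_coherence_def using fin by (intro Max_ge) auto
  have off: "\<bar>gram A i j\<bar> \<le> mu" if "i \<noteq> j" for i j
    unfolding mu_def mutual_coherence_def gram_def using fin that by (intro Max_ge) auto
  have diag: "gram A i i = 1" for i
    unfolding gram_def using col by (metis power2_norm_eq_inner one_power2)
  have mul': "mu < 1 / (2 * real k - 1)" using mul unfolding mu_def .
  have m1: "(2 * real k - 1) * mu < 1" using mul' kr by (simp add: field_simps)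
  have km: "(real k - 1) * mu \<le> (2 * real k - 1) * mu" using mu0 kr by (intro mult_right_mono) auto
  have c0: "c > 0" unfolding c_def using m1 km by linarith
  have cardT: "card T \<le> k" using best unfolding best_k_term_def l0_def T_def by simp
  have xkT: "xk$i = x$i" if "i \<in> T" for i
  proof -
    define y where "y = (\<chi> i. if i \<in> T then x$i else 0)"
    have "{i. y$i \<noteq> 0} \<subseteq> T" unfolding y_def by auto
    hence "l0 y \<le> card T" unfolding l0_def by (intro card_mono) auto
    hence "l0 y \<le> k" using cardT by simp
    hence "norm (xk - x) \<le> norm (y - x)" using best unfolding best_k_term_def by blast
    hence "(norm (xk - x))\<^sup>2 \<le> (norm (y - x))\<^sup>2" by (intro power_mono) auto
    hence le: "(\<Sum>i\<in>UNIV. ((xk - x)$i)\<^sup>2) \<le> (\<Sum>i\<in>UNIV. ((y - x)$i)\<^sup>2)" by (simp add: norm_sq_sum)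
    have e1: "(\<Sum>i\<in>UNIV. ((xk - x)$i)\<^sup>2) = (\<Sum>i\<in>UNIV. (if i \<in> T then (xk$i - x$i)\<^sup>2 else 0))
         + (\<Sum>i\<in>UNIV. (if i \<in> T then 0 else (x$i)\<^sup>2))"
      by (simp add: sum.distrib[symmetric] T_def cong: if_cong) (intro sum.cong, auto)
    have e2: "(\<Sum>i\<in>UNIV. ((y - x)$i)\<^sup>2) = (\<Sum>i\<in>UNIV. (if i \<in> T then 0 else (x$i)\<^sup>2))"
      unfolding y_def by (intro sum.cong) auto
    have "(\<Sum>i\<in>UNIV. (if i \<in> T then (xk$i - x$i)\<^sup>2 else 0)) \<le> 0" using le e1 e2 by linarith
    moreover have "0 \<le> (\<Sum>i\<in>UNIV. (if i \<in> T then (xk$i - x$i)\<^sup>2 else 0))"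
      by (intro sum_nonneg) simp
    ultimately have "(\<Sum>i\<in>UNIV. (if i \<in> T then (xk$i - x$i)\<^sup>2 else 0)) = 0"
      by linarith
    hence "(if i \<in> T then (xk$i - x$i)\<^sup>2 else 0) = 0"
      using sum_nonneg_eq_0_iff[of UNIV "\<lambda>i. (if i \<in> T then (xk$i - x$i)\<^sup>2 else (0::real))"] by simp
    thus ?thesis using that by simp
  qed
  have s_eq: "s = (\<Sum>i\<in>UNIV. (if i \<in> T then 0 else \<bar>x$i\<bar>))"
    unfolding s_def l1_def
  proof (intro sum.cong refl)
    fix i
    show "\<bar>(x - xk)$i\<bar> = (if i \<in> T then 0 else \<bar>x$i\<bar>)"
    proof (cases "i \<in> T")
      case True thus ?thesis using xkT[OF True] by simp
    next
      case False hence "xk$i = 0" unfolding T_def by simp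
      thus ?thesis using False by simp
    qed
  qed
  have s0: "s \<ge> 0" unfolding s_eq by (intro sum_nonneg) auto
  have xs_eq: "xs = x + h" unfolding h_def by simp
  have r1: "b - A *v x = z" using bdef by simp
  have r2: "b - A *v xs = z - A *v h" using bdef unfolding xs_eq by (simp add: matrix_vector_right_distrib)
  have "lasso_obj lam A b xs \<le> lasso_obj lam A b x" using opt by blast
  hence ob: "l1 xs + 1 / (2 * lam) * (norm (z - A *v h))\<^sup>2 \<le> l1 x + 1 / (2 * lam) * (norm z)\<^sup>2"
    unfolding lasso_obj_def r1 r2 .
  have nd: "(norm (z - A *v h))\<^sup>2 = (norm z)\<^sup>2 - 2 * (z \<bullet> (A *v h)) + u\<^sup>2"
    unfolding u_def by (simp add: power2_norm_eq_inner inner_diff_left inner_diff_right inner_commute algebra_simps)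
  have cs: "z \<bullet> (A *v h) \<le> \<epsilon> * u"
  proof -
    have "z \<bullet> (A *v h) \<le> norm z * u" unfolding u_def by (rule norm_cauchy_schwarz)
    also have "\<dots> \<le> \<epsilon> * u" using zn unfolding u_def by (intro mult_right_mono) auto
    finally show ?thesis .
  qed
  have "(norm z)\<^sup>2 - 2 * (z \<bullet> (A *v h)) + u\<^sup>2 \<le> 2 * lam * (l1 x - l1 xs) + (norm z)\<^sup>2"
  proof -
    have "1 / (2 * lam) * ((norm z)\<^sup>2 - 2 * (z \<bullet> (A *v h)) + u\<^sup>2) \<le> 1 / (2 * lam) * (2 * lam * (l1 x - l1 xs) + (norm z)\<^sup>2)"
      using ob lam unfolding nd by (simp add: algebra_simps)
    moreover have "0 < 1 / (2 * lam)" using lam by simp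
    ultimately show ?thesis by (rule mult_left_le_imp_le)
  qed
  hence E1: "u\<^sup>2 \<le> 2 * lam * (l1 x - l1 xs) + 2 * \<epsilon> * u" using cs by linarith
  have vT: "v$i = (if i \<in> T then h$i else 0)" for i unfolding v_def by simp
  have wT: "w$i = (if i \<in> T then 0 else h$i)" for i unfolding w_def by simp
  have E2: "l1 x - l1 xs \<le> (\<Sum>i\<in>UNIV. \<bar>v$i\<bar>) - q + 2 * s"
  proof -
    have "l1 x - l1 xs = (\<Sum>i\<in>UNIV. \<bar>x$i\<bar> - \<bar>x$i + h$i\<bar>)"
      unfolding l1_def xs_eq by (simp add: sum_subtractf)
    also have "\<dots> \<le> (\<Sum>i\<in>UNIV. \<bar>v$i\<bar> - \<bar>w$i\<bar> + 2 * (if i \<in> T then 0 else \<bar>x$i\<bar>))"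
    proof (intro sum_mono)
      fix i
      show "\<bar>x$i\<bar> - \<bar>x$i + h$i\<bar> \<le> \<bar>v$i\<bar> - \<bar>w$i\<bar> + 2 * (if i \<in> T then 0 else \<bar>x$i\<bar>)"
        unfolding vT wT by (cases "i \<in> T") (simp_all add: abs_if)
    qed
    also have "\<dots> = (\<Sum>i\<in>UNIV. \<bar>v$i\<bar>) - q + 2 * s"
      unfolding q_def s_eq by (simp add: sum.distrib sum_subtractf sum_distrib_left)
    finally show ?thesis .
  qed
  have E3: "(\<Sum>i\<in>UNIV. \<bar>v$i\<bar>) \<le> sqrt (real k) * p"
  proof -
    define a where "a = (\<chi> i. \<bar>v$i\<bar>)"
    define e where "e = (\<chi> i. if i \<in> T then (1::real) else 0)"
    have "(\<Sum>i\<in>UNIV. \<bar>v$i\<bar>) = a \<bullet> e" unfolding a_def e_def inner_vec_def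
      by (intro sum.cong) (auto simp: vT)
    also have "\<dots> \<le> norm a * norm e" by (rule norm_cauchy_schwarz)
    also have "norm a = p" unfolding p_def a_def norm_eq_sum by simp
    also have "norm e = sqrt (real (card T))" unfolding e_def norm_eq_sum
      by (simp add: if_distrib[where f="\<lambda>x. x\<^sup>2"] sum.If_cases cong: if_cong)
    also have "p * sqrt (real (card T)) \<le> sqrt (real k) * p"
      using cardT unfolding p_def by (simp add: mult.commute mult_left_mono)
    finally show ?thesis .
  qed
  have p0: "p \<ge> 0" unfolding p_def by simp
  have q0: "q \<ge> 0" unfolding q_def by (intro sum_nonneg) auto
  have u0: "u \<ge> 0" unfolding u_def by simp
  have L1v0: "0 \<le> (\<Sum>i\<in>UNIV. \<bar>v$i\<bar>)" by (intro sum_nonneg) auto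
  have H1: "u\<^sup>2 \<le> 2 * lam * (sqrt (real k) * p - q + 2 * s) + 2 * \<epsilon> * u"
  proof -
    have "2 * lam * (l1 x - l1 xs) \<le> 2 * lam * (sqrt (real k) * p - q + 2 * s)"
      using E2 E3 lam by (intro mult_left_mono) auto
    thus ?thesis using E1 by linarith
  qed
  have hvw: "h = v + w" unfolding v_def w_def by (simp add: vec_eq_iff)
  have L1sq: "(\<Sum>i\<in>UNIV. \<bar>v$i\<bar>)\<^sup>2 \<le> real k * p\<^sup>2"
  proof -
    have "(\<Sum>i\<in>UNIV. \<bar>v$i\<bar>)\<^sup>2 \<le> (sqrt (real k) * p)\<^sup>2" using E3 L1v0 by (intro power_mono) auto
    thus ?thesis by (simp add: power_mult_distrib)
  qed
  have vv: "(\<Sum>i\<in>UNIV. v$i * v$i) = p\<^sup>2" "(\<Sum>i\<in>UNIV. \<bar>v$i\<bar> * \<bar>v$i\<bar>) = p\<^sup>2"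
    unfolding p_def norm_sq_sum by (simp_all add: power2_eq_square abs_mult_self_eq)
  have Svv: "\<bar>(norm (A *v v))\<^sup>2 - p\<^sup>2\<bar> \<le> mu * ((\<Sum>i\<in>UNIV. \<bar>v$i\<bar>) * (\<Sum>i\<in>UNIV. \<bar>v$i\<bar>) - p\<^sup>2)"
    using offdiag[of "gram A" mu "\<lambda>i. v$i" "\<lambda>i. v$i", OF diag off] vv
    by (simp add: power2_norm_eq_inner Av_inner)
  have "mu * ((\<Sum>i\<in>UNIV. \<bar>v$i\<bar>) * (\<Sum>i\<in>UNIV. \<bar>v$i\<bar>) - p\<^sup>2) \<le> mu * (real k * p\<^sup>2 - p\<^sup>2)"
    using L1sq mu0 by (intro mult_left_mono) (auto simp: power2_eq_square)
  hence Svv': "\<bar>(norm (A *v v))\<^sup>2 - p\<^sup>2\<bar> \<le> mu * (real k * p\<^sup>2 - p\<^sup>2)" using Svv by linarith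
  have low: "c * p\<^sup>2 \<le> (norm (A *v v))\<^sup>2" using Svv' unfolding c_def by (simp add: algebra_simps abs_le_iff)
  have "(norm (A *v v))\<^sup>2 \<le> (1 + (real k - 1) * mu) * p\<^sup>2" using Svv' by (simp add: algebra_simps abs_le_iff)
  hence upv: "norm (A *v v) \<le> sqrt (1 + (real k - 1) * mu) * p"
    using p0 by (metis real_le_rsqrt real_sqrt_mult real_sqrt_abs abs_of_nonneg)
  have vw0: "(\<Sum>i\<in>UNIV. v$i * w$i) = 0" "(\<Sum>i\<in>UNIV. \<bar>v$i\<bar> * \<bar>w$i\<bar>) = 0"
    unfolding vT wT by (simp_all add: if_distrib cong: if_cong)
  have Svw: "\<bar>(A *v v) \<bullet> (A *v w)\<bar> \<le> mu * ((\<Sum>i\<in>UNIV. \<bar>v$i\<bar>) * q)"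
    using offdiag[of "gram A" mu "\<lambda>i. v$i" "\<lambda>i. w$i", OF diag off] vw0
    by (simp add: Av_inner q_def)
  have "mu * ((\<Sum>i\<in>UNIV. \<bar>v$i\<bar>) * q) \<le> mu * (sqrt (real k) * p * q)"
    using E3 mu0 q0 by (intro mult_left_mono mult_right_mono) auto
  hence Svw': "\<bar>(A *v v) \<bullet> (A *v w)\<bar> \<le> sqrt (real k) * mu * p * q" using Svw by (simp add: algebra_simps)
  have "(A *v v) \<bullet> (A *v h) = (norm (A *v v))\<^sup>2 + (A *v v) \<bullet> (A *v w)"
    unfolding hvw by (simp add: matrix_vector_right_distrib inner_add_right power2_norm_eq_inner)
  moreover have "(A *v v) \<bullet> (A *v h) \<le> norm (A *v v) * u" unfolding u_def by (rule norm_cauchy_schwarz)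
  moreover have "norm (A *v v) * u \<le> sqrt (1 + (real k - 1) * mu) * p * u"
    using upv u0 by (rule mult_right_mono)
  ultimately have "c * p\<^sup>2 \<le> sqrt (1 + (real k - 1) * mu) * p * u + sqrt (real k) * mu * p * q"
    using low Svw' by linarith
  hence H2: "p \<le> sqrt (1 + (real k - 1) * mu) / (1 - (real k - 1) * mu) * u
                + sqrt (real k) * mu / (1 - (real k - 1) * mu) * q"
  proof (cases "p = 0")
    case True
    have "0 \<le> 1 + (real k - 1) * mu" using kr mu0 by simp
    hence "0 \<le> sqrt (1 + (real k - 1) * mu) / c * u + sqrt (real k) * mu / c * q"
      using c0 u0 q0 mu0 by (intro add_nonneg_nonneg mult_nonneg_nonneg divide_nonneg_pos) auto
    thus ?thesis using True unfolding c_def[symmetric] by simp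
  next
    case False
    hence pp: "p > 0" using p0 by simp
    assume "c * p\<^sup>2 \<le> sqrt (1 + (real k - 1) * mu) * p * u + sqrt (real k) * mu * p * q"
    hence "p * (c * p) \<le> p * (sqrt (1 + (real k - 1) * mu) * u + sqrt (real k) * mu * q)"
      by (simp add: power2_eq_square algebra_simps)
    hence "c * p \<le> sqrt (1 + (real k - 1) * mu) * u + sqrt (real k) * mu * q"
      using pp by (simp add: mult_le_cancel_left_pos)
    thus ?thesis using c0 unfolding c_def[symmetric] by (simp add: field_simps)
  qed
  define L where "L = (\<Sum>i\<in>UNIV. \<bar>h$i\<bar>)"
  have L0: "L \<ge> 0" unfolding L_def by (intro sum_nonneg) auto
  have hh: "(\<Sum>i\<in>UNIV. h$i * h$i) = (norm h)\<^sup>2" "(\<Sum>i\<in>UNIV. \<bar>h$i\<bar> * \<bar>h$i\<bar>) = (norm h)\<^sup>2"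
    unfolding norm_sq_sum by (simp_all add: power2_eq_square abs_mult_self_eq)
  have Shh: "\<bar>u\<^sup>2 - (norm h)\<^sup>2\<bar> \<le> mu * (L * L - (norm h)\<^sup>2)"
    using offdiag[of "gram A" mu "\<lambda>i. h$i" "\<lambda>i. h$i", OF diag off] hh
    unfolding u_def L_def by (simp add: power2_norm_eq_inner Av_inner)
  have "mu * (L * L - (norm h)\<^sup>2) \<le> mu * (L * L)" using mu0 by (simp add: mult_left_mono)
  hence "(norm h)\<^sup>2 \<le> u\<^sup>2 + mu * L\<^sup>2" using Shh by (simp add: abs_le_iff power2_eq_square)
  also have "\<dots> \<le> (u + sqrt mu * L)\<^sup>2"
    using u0 L0 mu0 by (simp add: power2_eq_square algebra_simps)
  finally have sqh: "(norm h)\<^sup>2 \<le> (u + sqrt mu * L)\<^sup>2" .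
  have "0 \<le> u + sqrt mu * L" using u0 L0 mu0 by simp
  hence "norm h \<le> u + sqrt mu * L" using power2_le_imp_le[OF sqh] by blast
  moreover have "L = (\<Sum>i\<in>UNIV. \<bar>v$i\<bar>) + q"
    unfolding L_def q_def sum.distrib[symmetric] by (intro sum.cong) (auto simp: vT wT)
  moreover have "sqrt mu * ((\<Sum>i\<in>UNIV. \<bar>v$i\<bar>) + q) \<le> sqrt mu * (sqrt (real k) * p + q)"
    using E3 mu0 by (intro mult_left_mono) auto
  ultimately have H3: "norm h \<le> u + sqrt mu * (sqrt (real k) * p + q)"
    by (metis add_left_mono order_trans)
  have lam0: "lam > 0" using lam .
  from alg_final[OF k2 mu0 mul' lam eps s0 u0 p0 q0 H1 H2 H3]
  show ?thesis unfolding mu_def u_def s_def h_def .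
qed

end
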